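(* Let $\mathbb F$ be a field, let $A\subset\mathbb F$ be a finite set, let $n\le |A|$, and let $a_1,\dots,a_n\in\mathbb F\setminus\{0\}$ (not necessarily distinct). Let $n_1,\dots,n_t$ be the multiplicities of the distinct values occurring among $a_1,\dots,a_n$ (so $\sum_{i=1}^t n_i=n$), and put $$d:=n\big(|A|-n\big)+\sum_{1\le i<j\le t}n_in_j .$$ If $\mathbb F$ has characteristic $0$ or characteristic $p>d$, then $$\Big|\Big\{\sum_{i=1}^n a_ix_i \;:\; x_1,\dots,x_n\in A,\ x_i\ne x_j \text{ for } i\ne j\Big\}\Big|\ \ge\ d+1 .$$ *)

theory Defs
  imports Main
begin

definition mult_of :: "(nat \<Rightarrow> 'a) \<Rightarrow> nat \<Rightarrow> 'a \<Rightarrow> nat" where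
  "mult_of a n v = card {i \<in> {1..n}. a i = v}"

text \<open>Sum over i < j of n_i n_j, i.e. over unordered pairs of distinct values occurring among a 1..a n.\<close>
definition pair_mult_sum :: "(nat \<Rightarrow> 'a) \<Rightarrow> nat \<Rightarrow> nat" where
  "pair_mult_sum a n =
     (\<Sum>S\<in>{S. S \<subseteq> a ` {1..n} \<and> card S = 2}. \<Prod>v\<in>S. mult_of a n v)"

definition dval :: "'a set \<Rightarrow> (nat \<Rightarrow> 'a) \<Rightarrow> nat \<Rightarrow> nat" where
  "dval A a n = n * (card A - n) + pair_mult_sum a n"

definition restricted_sums :: "'a::field set \<Rightarrow> (nat \<Rightarrow> 'a) \<Rightarrow> nat \<Rightarrow> 'a set" where
  "restricted_sums A a n =
     {(\<Sum>i=1..n. a i * x i) | x. (\<forall>i\<in>{1..n}. x i \<in> A) \<and> inj_on x {1..n}}"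

end

theory Submission
  imports Defs "Jordan_Normal_Form.Determinant" "HOL-Library.FuncSet"
begin

definition wt :: "'a::field set \<Rightarrow> 'a \<Rightarrow> 'a" where
  "wt A y = inverse (\<Prod>b\<in>A-{y}. (y - b))"

lemma monic_prod_lin:
  fixes B :: "'a::field set"
  assumes "finite B"
  shows "degree (\<Prod>b\<in>B. [:-b,1:]) = card B \<and> coeff (\<Prod>b\<in>B. [:-b,1:]) (card B) = 1"
proof -
  have d: "degree (\<Prod>b\<in>B. [:-b,1:]) = card B"
    by (subst degree_prod_eq_sum_degree) auto
  have "lead_coeff (\<Prod>b\<in>B. [:-b,1:]) = 1"
    by (simp add: lead_coeff_prod)
  with d show ?thesis by simp
qed

lemma lagr:
  fixes A :: "'a::field set"
  assumes fin: "finite A" and e: "e < card A"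
  shows "(\<Sum>y\<in>A. y^e * wt A y) = (if e = card A - 1 then 1 else 0)"
proof -
  define L where "L y = (\<Prod>b\<in>A-{y}. [:-b,1:])" for y
  define p where "p = (\<Sum>y\<in>A. smult (y^e * wt A y) (L y)) - monom 1 e"
  have Ly: "y \<in> A \<Longrightarrow> degree (L y) = card A - 1 \<and> coeff (L y) (card A - 1) = 1" for y
    using monic_prod_lin[of "A-{y}"] fin unfolding L_def by (simp add: card_Diff_singleton)
  have degp: "degree p \<le> card A - 1"
    unfolding p_def
    apply (rule degree_diff_le)
     apply (rule degree_sum_le[OF fin])
    using Ly apply (metis degree_smult_le order_trans)
    using e by (simp add: degree_monom_eq)
  have root: "poly p z = 0" if z: "z \<in> A" for z
  proof -
    have "poly (\<Sum>y\<in>A. smult (y^e * wt A y) (L y)) z = (\<Sum>y\<in>A. y^e * wt A y * poly (L y) z)"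
      by (simp add: poly_sum)
    also have "\<dots> = z^e * wt A z * poly (L z) z"
    proof (rule sum.remove[OF fin z, THEN trans])
      have "poly (L y) z = 0" if "y \<in> A - {z}" for y
        using that z fin unfolding L_def by (auto simp: poly_prod intro!: prod_zero bexI[of _ z])
      then show "z ^ e * wt A z * poly (L z) z + (\<Sum>y\<in>A - {z}. y ^ e * wt A y * poly (L y) z) =
        z ^ e * wt A z * poly (L z) z" by simp
    qed
    also have "\<dots> = z^e"
    proof -
      have "poly (L z) z = (\<Prod>b\<in>A-{z}. (z - b))" unfolding L_def by (simp add: poly_prod)
      moreover have "(\<Prod>b\<in>A-{z}. (z - b)) \<noteq> 0" using fin by (simp add: prod_zero_iff)
      ultimately show ?thesis unfolding wt_def by simp
    qed
    finally show ?thesis unfolding p_def by (simp add: poly_monom)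
  qed
  have p0: "p = 0"
  proof (rule ccontr)
    assume "p \<noteq> 0"
    then have "card {x. poly p x = 0} \<le> degree p" by (rule card_poly_roots_bound)
    moreover have "card A \<le> card {x. poly p x = 0}"
      using root \<open>p \<noteq> 0\<close> by (intro card_mono poly_roots_finite) auto
    ultimately show False using degp e by linarith
  qed
  have "coeff p (card A - 1) = (\<Sum>y\<in>A. y^e * wt A y) - (if e = card A - 1 then 1 else 0)"
    unfolding p_def using Ly by (simp add: coeff_sum)
  with p0 show ?thesis by simp
qed

definition Lf :: "'a::field set \<Rightarrow> nat \<Rightarrow> ((nat \<Rightarrow> 'a) \<Rightarrow> 'a) \<Rightarrow> 'a" where
  "Lf A n F = (\<Sum>c \<in> PiE {..<n} (\<lambda>_. A). F c * (\<Prod>i<n. wt A (c i)))"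

lemma Lf_prod:
  assumes "finite A"
  shows "Lf A n (\<lambda>x. \<Prod>i<n. g i (x i)) = (\<Prod>i<n. \<Sum>y\<in>A. g i y * wt A y)"
  unfolding Lf_def using assms by (simp add: prod_sum_PiE prod.distrib)

lemma Lf_sum: "Lf A n (\<lambda>x. \<Sum>s\<in>S. F s x) = (\<Sum>s\<in>S. Lf A n (F s))"
  unfolding Lf_def sum_distrib_right by (rule sum.swap)

lemma Lf_cmult: "Lf A n (\<lambda>x. c * F x) = c * Lf A n F"
  unfolding Lf_def by (simp add: sum_distrib_left mult.assoc)

lemma Lf_cong: "(\<And>x. x \<in> PiE {..<n} (\<lambda>_. A) \<Longrightarrow> F x = G x) \<Longrightarrow> Lf A n F = Lf A n G"
  unfolding Lf_def by simp

lemma sum_eq_nK: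
  fixes t :: "nat \<Rightarrow> nat"
  assumes "(\<Sum>i<n. t i) \<le> n * K" "\<not> (\<forall>i<n. t i = K)"
  shows "\<exists>i<n. t i < K"
proof (rule ccontr)
  assume "\<not> ?thesis"
  then have ge: "\<forall>i<n. K \<le> t i" by auto
  from assms(2) obtain j where j: "j < n" "t j \<noteq> K" by auto
  with ge have "K < t j" by force
  then have "(\<Sum>i<n. K) < (\<Sum>i<n. t i)"
    using ge j by (intro sum_strict_mono_ex1) auto
  then show False using assms(1) by simp
qed

lemma Lf_mono:
  fixes A :: "'a::field set"
  assumes fin: "finite A" and ne: "A \<noteq> {}"
    and s: "(\<Sum>i<n. t i) \<le> n * (card A - 1)"
  shows "Lf A n (\<lambda>x. \<Prod>i<n. x i ^ t i) = (if \<forall>i<n. t i = card A - 1 then 1 else 0)"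
proof -
  have cA: "card A > 0" using fin ne by (simp add: card_gt_0_iff)
  have "Lf A n (\<lambda>x. \<Prod>i<n. x i ^ t i) = (\<Prod>i<n. \<Sum>y\<in>A. y ^ t i * wt A y)"
    by (rule Lf_prod[OF fin])
  also have "\<dots> = (if \<forall>i<n. t i = card A - 1 then 1 else 0)"
  proof (cases "\<forall>i<n. t i = card A - 1")
    case True
    then show ?thesis using lagr[OF fin] cA by simp
  next
    case False
    then obtain i where i: "i < n" "t i < card A - 1" using sum_eq_nK[OF s] by blast
    then have "(\<Sum>y\<in>A. y ^ t i * wt A y) = 0" using lagr[OF fin, of "t i"] by simp
    then show ?thesis using False i by (auto intro!: prod_zero bexI[of _ i])
  qed
  finally show ?thesis .
qed

definition Sx :: "(nat \<Rightarrow> 'a::field) \<Rightarrow> nat \<Rightarrow> (nat \<Rightarrow> 'a) \<Rightarrow> 'a" where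
  "Sx a n x = (\<Sum>i<n. a i * x i)"

definition H :: "'a::field set \<Rightarrow> (nat \<Rightarrow> 'a) \<Rightarrow> nat \<Rightarrow> nat \<Rightarrow> (nat \<Rightarrow> nat) \<Rightarrow> 'a" where
  "H A a n k t = Lf A n (\<lambda>x. (\<Prod>i<n. x i ^ t i) * Sx a n x ^ k)"

lemma prod_remove_upd:
  fixes F :: "nat \<Rightarrow> nat \<Rightarrow> 'b::comm_monoid_mult"
  assumes j: "j < n"
  shows "(\<Prod>i<n. F i ((t(j:=v)) i)) = F j v * (\<Prod>i\<in>{..<n}-{j}. F i (t i))"
proof -
  have "(\<Prod>i<n. F i ((t(j:=v)) i)) = F j v * (\<Prod>i\<in>{..<n}-{j}. F i ((t(j:=v)) i))"
    using j by (subst prod.remove[of "{..<n}" j]) auto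
  also have "(\<Prod>i\<in>{..<n}-{j}. F i ((t(j:=v)) i)) = (\<Prod>i\<in>{..<n}-{j}. F i (t i))"
    by (rule prod.cong) auto
  finally show ?thesis .
qed

lemma prod_remove1:
  fixes F :: "nat \<Rightarrow> 'b::comm_monoid_mult"
  assumes j: "j < n"
  shows "(\<Prod>i<n. F i) = F j * (\<Prod>i\<in>{..<n}-{j}. F i)"
  using j by (subst prod.remove[of "{..<n}" j]) auto

lemma prod_upd:
  fixes x :: "nat \<Rightarrow> 'a::field"
  assumes "j < n"
  shows "(\<Prod>i<n. x i ^ (t(j := Suc (t j))) i) = x j * (\<Prod>i<n. x i ^ t i)"
  using prod_remove_upd[OF assms, of "\<lambda>i m. x i ^ m" t "Suc (t j)"] prod_remove1[OF assms, of "\<lambda>i. x i ^ t i"]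
  by simp

lemma H_Suc: "H A a n (Suc k) t = (\<Sum>j<n. a j * H A a n k (t(j := Suc (t j))))"
proof -
  have "(\<Prod>i<n. x i ^ t i) * Sx a n x ^ Suc k =
        (\<Sum>j<n. a j * (x j * (\<Prod>i<n. x i ^ t i)) * Sx a n x ^ k)" for x
    by (simp add: Sx_def sum_distrib_left sum_distrib_right mult_ac)
  also have "\<dots> x = (\<Sum>j<n. a j * ((\<Prod>i<n. x i ^ (t(j := Suc (t j))) i) * Sx a n x ^ k))" for x
  proof (rule sum.cong[OF refl])
    fix j assume "j \<in> {..<n}"
    then have j: "j < n" by simp
    show "a j * (x j * (\<Prod>i<n. x i ^ t i)) * Sx a n x ^ k =
        a j * ((\<Prod>i<n. x i ^ (t(j := Suc (t j))) i) * Sx a n x ^ k)"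
      by (subst prod_upd[OF j]) (simp add: mult_ac)
  qed
  finally show ?thesis unfolding H_def by (simp add: Lf_sum Lf_cmult)
qed

lemma sum_upd: 
  fixes t :: "nat \<Rightarrow> nat"
  assumes j: "j < n" shows "(\<Sum>i<n. (t(j := Suc (t j))) i) = Suc (\<Sum>i<n. t i)"
proof -
  have "(\<Sum>i<n. (t(j := Suc (t j))) i) = Suc (t j) + (\<Sum>i\<in>{..<n}-{j}. (t(j := Suc (t j))) i)"
    using j by (subst sum.remove[of "{..<n}" j]) auto
  also have "(\<Sum>i\<in>{..<n}-{j}. (t(j := Suc (t j))) i) = (\<Sum>i\<in>{..<n}-{j}. t i)"
    by (rule sum.cong) auto
  also have "Suc (t j) + (\<Sum>i\<in>{..<n}-{j}. t i) = Suc (t j + (\<Sum>i\<in>{..<n}-{j}. t i))" by simp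
  also have "t j + (\<Sum>i\<in>{..<n}-{j}. t i) = (\<Sum>i<n. t i)"
    by (rule sum.remove[symmetric]) (use j in auto)
  finally show ?thesis .
qed

lemma H_low:
  fixes A :: "'a::field set"
  assumes fin: "finite A" and ne: "A \<noteq> {}"
  shows "(\<Sum>i<n. t i) + k < n * (card A - 1) \<Longrightarrow> H A a n k t = 0"
proof (induction k arbitrary: t)
  case 0
  have "H A a n 0 t = Lf A n (\<lambda>x. \<Prod>i<n. x i ^ t i)" unfolding H_def by simp
  also have "\<dots> = 0"
  proof -
    have "\<not> (\<forall>i<n. t i = card A - 1)"
    proof
      assume "\<forall>i<n. t i = card A - 1"
      then have "(\<Sum>i<n. t i) = n * (card A - 1)" by simp
      then show False using 0 by simp
    qed
    then show ?thesis using Lf_mono[OF fin ne, of t n] 0 by simp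
  qed
  finally show ?case .
next
  case (Suc k)
  show ?case unfolding H_Suc
  proof (rule sum.neutral, intro ballI)
    fix j assume "j \<in> {..<n}" then have j: "j < n" by simp
    have s: "sum (t(j := Suc (t j))) {..<n} = Suc (sum t {..<n})" using sum_upd[OF j, of t] by simp
    have "H A a n k (t(j := Suc (t j))) = 0"
      apply (rule Suc.IH) unfolding s using Suc.prems by simp
    then show "a j * H A a n k (t(j := Suc (t j))) = 0" by simp
  qed
qed

lemma fact_nz:
  assumes "of_nat (fact K) \<noteq> (0::'a::field)" "m \<le> K"
  shows "of_nat (fact m) \<noteq> (0::'a)"
proof
  assume "of_nat (fact m) = (0::'a)"
  moreover have "fact m dvd (fact K :: nat)" using assms(2) by (rule fact_dvd)
  then obtain q where "fact K = fact m * (q::nat)" by (auto elim: dvdE)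
  ultimately show False using assms(1) by simp
qed

definition cf :: "(nat \<Rightarrow> 'a::field) \<Rightarrow> nat \<Rightarrow> nat \<Rightarrow> nat \<Rightarrow> 'a" where
  "cf a K i m = a i ^ m / of_nat (fact m)"

lemma cf_step:
  assumes "of_nat (fact K) \<noteq> (0::'a::field)" "m \<le> K" "0 < m"
  shows "(a :: nat \<Rightarrow> 'a) i * cf a K i (m - 1) = of_nat m * cf a K i m"
proof -
  obtain m' where m: "m = Suc m'" using assms(3) by (cases m) auto
  have nz: "of_nat (fact m) \<noteq> (0::'a)" using fact_nz[OF assms(1) assms(2)] .
  then have nz1: "of_nat (Suc m') \<noteq> (0::'a)" and nz2: "of_nat (fact m') \<noteq> (0::'a)"
    unfolding m fact_Suc of_nat_mult by auto
  have aux: "s \<noteq> 0 \<Longrightarrow> f \<noteq> 0 \<Longrightarrow> (x::'a) * (y / f) = s * (x * y / (s * f))" for s f x y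
    by (simp add: field_simps)
  show ?thesis unfolding cf_def m fact_Suc of_nat_mult power_Suc diff_Suc_1 of_nat_id
    by (rule aux[OF nz1 nz2])
qed

lemma H_top:
  fixes A :: "'a::field set"
  assumes fin: "finite A" and ne: "A \<noteq> {}" and ch: "of_nat (fact (card A - 1)) \<noteq> (0::'a)"
  shows "(\<Sum>i<n. t i) + k = n * (card A - 1) \<Longrightarrow>
    H A a n k t = (if \<forall>i<n. t i \<le> card A - 1
       then of_nat (fact k) * (\<Prod>i<n. cf a (card A - 1) i (card A - 1 - t i)) else 0)"
proof (induction k arbitrary: t)
  case 0
  have "H A a n 0 t = Lf A n (\<lambda>x. \<Prod>i<n. x i ^ t i)" unfolding H_def by simp
  also have "\<dots> = (if \<forall>i<n. t i = card A - 1 then 1 else 0)"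
    using Lf_mono[OF fin ne, of t n] 0 by simp
  also have "\<dots> = (if \<forall>i<n. t i \<le> card A - 1
       then of_nat (fact 0) * (\<Prod>i<n. cf a (card A - 1) i (card A - 1 - t i)) else 0)"
  proof (cases "\<forall>i<n. t i = card A - 1")
    case True
    then show ?thesis by (simp add: cf_def)
  next
    case False
    then obtain i where i: "i < n" "t i < card A - 1" using sum_eq_nK[of t n] 0 by auto
    have "\<not> (\<forall>i<n. t i \<le> card A - 1)"
    proof
      assume le: "\<forall>i<n. t i \<le> card A - 1"
      then have "(\<Sum>i<n. t i) < (\<Sum>i<n. card A - 1)"
        using i by (intro sum_strict_mono_ex1) auto
      then show False using 0 by simp
    qed
    then show ?thesis using False by auto
  qed
  finally show ?case .
next
  case (Suc k)
  define K where "K = card A - 1"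
  note IH = Suc.IH[folded K_def]
  have sumS: "(\<Sum>i<n. t i) + Suc k = n * K" using Suc.prems K_def by simp
  have IH': "j < n \<Longrightarrow> H A a n k (t(j := Suc (t j))) = (if \<forall>i<n. (t(j := Suc (t j))) i \<le> K
       then of_nat (fact k) * (\<Prod>i<n. cf a K i (K - (t(j := Suc (t j))) i)) else 0)" for j
  proof -
    assume j: "j < n"
    have s: "sum (t(j := Suc (t j))) {..<n} = Suc (sum t {..<n})" using sum_upd[OF j, of t] by simp
    show ?thesis apply (rule IH) unfolding s using sumS by simp
  qed
  show ?case
  proof (cases "\<forall>i<n. t i \<le> K")
    case False
    then obtain i where i: "i < n" "K < t i" by auto
    have "H A a n (Suc k) t = 0" unfolding H_Suc
    proof (rule sum.neutral, intro ballI)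
      fix j assume "j \<in> {..<n}" then have j: "j < n" by simp
      have "(t(j := Suc (t j))) i > K" using i by auto
      then have "\<not> (\<forall>i'<n. (t(j := Suc (t j))) i' \<le> K)" using i by (meson not_le)
      then have "H A a n k (t(j := Suc (t j))) = 0" unfolding IH'[OF j] by (rule if_not_P)
      then show "a j * H A a n k (t(j := Suc (t j))) = 0" by simp
    qed
    moreover have "\<not> (\<forall>i<n. t i \<le> card A - 1)" using False K_def by simp
    ultimately show ?thesis by (simp only: if_not_P if_False)
  next
    case True
    define F where "F = (\<Prod>i<n. cf a K i (K - t i))"
    have tm: "a j * H A a n k (t(j := Suc (t j))) = of_nat (fact k) * (of_nat (K - t j) * F)"
      if j: "j < n" for j
    proof (cases "t j = K")
      case True
      then have "\<not> (\<forall>i'<n. (t(j := Suc (t j))) i' \<le> K)" using j by (metis Suc_n_not_le_n fun_upd_same)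
      then have "H A a n k (t(j := Suc (t j))) = 0" unfolding IH'[OF j] by (rule if_not_P)
      then show ?thesis using True by simp
    next
      case False
      then have lt: "t j < K" using \<open>\<forall>i<n. t i \<le> K\<close> j by force
      have "H A a n k (t(j := Suc (t j))) = of_nat (fact k) * (\<Prod>i<n. cf a K i (K - (t(j := Suc (t j))) i))"
        using IH'[OF j] True lt by auto
      also have "(\<Prod>i<n. cf a K i (K - (t(j := Suc (t j))) i)) =
          cf a K j (K - t j - 1) * (\<Prod>i\<in>{..<n}-{j}. cf a K i (K - t i))"
        using prod_remove_upd[OF j, of "\<lambda>i m. cf a K i (K - m)" t "Suc (t j)"] by simp
      finally have h: "H A a n k (t(j := Suc (t j))) = of_nat (fact k) *
          (cf a K j (K - t j - 1) * (\<Prod>i\<in>{..<n}-{j}. cf a K i (K - t i)))" .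
      have "a j * H A a n k (t(j := Suc (t j))) = of_nat (fact k) *
          ((a j * cf a K j (K - t j - 1)) * (\<Prod>i\<in>{..<n}-{j}. cf a K i (K - t i)))"
        unfolding h by (simp only: mult_ac)
      also have "a j * cf a K j (K - t j - 1) = of_nat (K - t j) * cf a K j (K - t j)"
        using cf_step[of K "K - t j" a j] ch K_def lt by simp
      also have "of_nat (K - t j) * cf a K j (K - t j) * (\<Prod>i\<in>{..<n}-{j}. cf a K i (K - t i))
          = of_nat (K - t j) * F"
        unfolding F_def using prod_remove1[OF j, of "\<lambda>i. cf a K i (K - t i)"] by (simp add: mult_ac)
      finally show ?thesis .
    qed
    have "H A a n (Suc k) t = (\<Sum>j<n. of_nat (fact k) * (of_nat (K - t j) * F))"
      unfolding H_Suc using tm by simp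
    also have "\<dots> = of_nat (fact k) * of_nat (\<Sum>j<n. K - t j) * F"
      by (simp add: sum_distrib_left sum_distrib_right mult_ac)
    also have "(\<Sum>j<n. K - t j) = Suc k"
    proof -
      have "(\<Sum>j<n. K - t j) = (\<Sum>j<n. K) - (\<Sum>j<n. t j)"
        using True by (intro sum_subtractf_nat) auto
      then show ?thesis using sumS by simp
    qed
    finally show ?thesis using True K_def F_def by (simp add: algebra_simps)
  qed
qed

definition V :: "nat \<Rightarrow> (nat \<Rightarrow> 'a::field) \<Rightarrow> 'a" where
  "V n x = det (mat n n (\<lambda>(i,j). x i ^ j))"

lemma V_expand: "V n x = (\<Sum>p\<in>{p. p permutes {..<n}}. signof p * (\<Prod>i<n. x i ^ p i))"
proof -
  have "V n x = (\<Sum>p\<in>{p. p permutes {0..<n}}. signof p * (\<Prod>i=0..<n. mat n n (\<lambda>(i,j). x i ^ j) $$ (i, p i)))"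
    unfolding V_def by (rule det_def') simp
  also have "\<dots> = (\<Sum>p\<in>{p. p permutes {..<n}}. signof p * (\<Prod>i<n. x i ^ p i))"
  proof (rule sum.cong)
    show "{p. p permutes {0..<n}} = {p. p permutes {..<n}}" by (simp add: atLeast0LessThan)
  next
    fix p assume "p \<in> {p. p permutes {..<n}}"
    then have p: "p permutes {..<n}" by simp
    have "(\<Prod>i=0..<n. mat n n (\<lambda>(i,j). x i ^ j) $$ (i, p i)) = (\<Prod>i<n. x i ^ p i)"
      unfolding atLeast0LessThan
      by (rule prod.cong) (use p permutes_in_image[OF p] in auto)
    then show "signof p * (\<Prod>i=0..<n. mat n n (\<lambda>(i,j). x i ^ j) $$ (i, p i)) = signof p * (\<Prod>i<n. x i ^ p i)"
      by simp
  qed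
  finally show ?thesis .
qed

lemma V_zero:
  assumes "\<not> inj_on x {..<n}"
  shows "V n x = 0"
proof -
  from assms obtain i j where ij: "i < n" "j < n" "i \<noteq> j" "x i = x j"
    unfolding inj_on_def by auto
  show ?thesis unfolding V_def
    by (rule det_identical_rows[of _ n i j]) (use ij in \<open>auto intro!: eq_vecI\<close>)
qed

lemma sum_perm:
  assumes "p permutes {..<n}"
  shows "(\<Sum>i<n. (p i :: nat)) = (\<Sum>i<n. i)"
  using sum.reindex_bij_betw[OF permutes_imp_bij[OF assms], of "\<lambda>i. i"] by simp

definition Bm :: "'a::field set \<Rightarrow> (nat \<Rightarrow> 'a) \<Rightarrow> nat \<Rightarrow> (nat \<Rightarrow> nat) \<Rightarrow> 'a mat" where
  "Bm A a n e = mat n n (\<lambda>(i,j). if e i + j \<le> card A - 1 then cf a (card A - 1) i (card A - 1 - (e i + j)) else 0)"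

lemma det_Bm: "det (Bm A a n e) = (\<Sum>p\<in>{p. p permutes {..<n}}. signof p *
   (if \<forall>i<n. e i + p i \<le> card A - 1 then (\<Prod>i<n. cf a (card A - 1) i (card A - 1 - (e i + p i))) else 0))"
proof -
  define K where "K = card A - 1"
  have "det (Bm A a n e) = (\<Sum>p\<in>{p. p permutes {0..<n}}. signof p * (\<Prod>i=0..<n. Bm A a n e $$ (i, p i)))"
    unfolding Bm_def by (rule det_def') simp
  also have "\<dots> = (\<Sum>p\<in>{p. p permutes {..<n}}. signof p *
   (if \<forall>i<n. e i + p i \<le> K then (\<Prod>i<n. cf a K i (K - (e i + p i))) else 0))"
  proof (rule sum.cong)
    show "{p. p permutes {0..<n}} = {p. p permutes {..<n}}" by (simp add: atLeast0LessThan)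
  next
    fix p assume "p \<in> {p. p permutes {..<n}}"
    then have p: "p permutes {..<n}" by simp
    have 1: "(\<Prod>i=0..<n. Bm A a n e $$ (i, p i)) = (\<Prod>i<n. if e i + p i \<le> K then cf a K i (K - (e i + p i)) else 0)"
      unfolding atLeast0LessThan Bm_def K_def
      by (rule prod.cong) (use p permutes_in_image[OF p] in auto)
    have 2: "(\<Prod>i<n. if e i + p i \<le> K then cf a K i (K - (e i + p i)) else 0) =
      (if \<forall>i<n. e i + p i \<le> K then (\<Prod>i<n. cf a K i (K - (e i + p i))) else 0)"
    proof (cases "\<forall>i<n. e i + p i \<le> K")
      case True then show ?thesis by (auto intro: prod.cong)
    next
      case False
      then obtain i where "i < n" "\<not> e i + p i \<le> K" by auto
      then show ?thesis using False by (auto intro!: prod_zero bexI[of _ i])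
    qed
    show "signof p * (\<Prod>i=0..<n. Bm A a n e $$ (i, p i)) = signof p *
      (if \<forall>i<n. e i + p i \<le> K then (\<Prod>i<n. cf a K i (K - (e i + p i))) else 0)"
      unfolding 1 2 ..
  qed
  finally show ?thesis unfolding K_def .
qed

lemma L_main:
  fixes A :: "'a::field set" and P :: "'a poly"
  assumes fin: "finite A" and ne: "A \<noteq> {}" and ch: "of_nat (fact (card A - 1)) \<noteq> (0::'a)"
    and sumh: "(\<Sum>i<n. e i) + (\<Sum>i<n. i) + degree P = n * (card A - 1)"
  shows "Lf A n (\<lambda>x. (\<Prod>i<n. x i ^ e i) * V n x * poly P (Sx a n x)) =
    of_nat (fact (degree P)) * lead_coeff P * det (Bm A a n e)"
proof -
  define K where "K = card A - 1"
  define PS where "PS = {p. p permutes {..<n}}"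
  have finPS: "finite PS" unfolding PS_def by (rule finite_permutations) simp
  have pt: "(\<Prod>i<n. x i ^ e i) * V n x * poly P (Sx a n x) =
     (\<Sum>k\<le>degree P. coeff P k * (\<Sum>p\<in>PS. signof p * ((\<Prod>i<n. x i ^ (e i + p i)) * Sx a n x ^ k)))" for x
    unfolding V_expand poly_altdef PS_def
    by (simp add: sum_distrib_left sum_distrib_right power_add prod.distrib mult_ac) (rule sum.swap)
  have "Lf A n (\<lambda>x. (\<Prod>i<n. x i ^ e i) * V n x * poly P (Sx a n x)) =
     (\<Sum>k\<le>degree P. coeff P k * (\<Sum>p\<in>PS. signof p * H A a n k (\<lambda>i. e i + p i)))"
    unfolding pt H_def by (simp add: Lf_sum Lf_cmult)
  also have "\<dots> = coeff P (degree P) * (\<Sum>p\<in>PS. signof p * H A a n (degree P) (\<lambda>i. e i + p i))"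
  proof -
    have "(\<Sum>k\<le>degree P. coeff P k * (\<Sum>p\<in>PS. signof p * H A a n k (\<lambda>i. e i + p i))) =
      coeff P (degree P) * (\<Sum>p\<in>PS. signof p * H A a n (degree P) (\<lambda>i. e i + p i)) +
      (\<Sum>k\<in>{..degree P}-{degree P}. coeff P k * (\<Sum>p\<in>PS. signof p * H A a n k (\<lambda>i. e i + p i)))"
      by (subst sum.remove[of _ "degree P"]) auto
    also have "(\<Sum>k\<in>{..degree P}-{degree P}. coeff P k * (\<Sum>p\<in>PS. signof p * H A a n k (\<lambda>i. e i + p i))) = 0"
    proof (rule sum.neutral, intro ballI)
      fix k assume "k \<in> {..degree P}-{degree P}"
      then have k: "k < degree P" by auto
      have "H A a n k (\<lambda>i. e i + p i) = 0" if p: "p \<in> PS" for p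
      proof (rule H_low[OF fin ne])
        have "(\<Sum>i<n. e i + p i) = (\<Sum>i<n. e i) + (\<Sum>i<n. i)"
          using sum_perm[of p n] p unfolding PS_def by (simp add: sum.distrib)
        then show "(\<Sum>i<n. e i + p i) + k < n * (card A - 1)" using sumh k by simp
      qed
      then show "coeff P k * (\<Sum>p\<in>PS. signof p * H A a n k (\<lambda>i. e i + p i)) = 0" by simp
    qed
    finally show ?thesis by simp
  qed
  also have "(\<Sum>p\<in>PS. signof p * H A a n (degree P) (\<lambda>i. e i + p i)) = of_nat (fact (degree P)) * det (Bm A a n e)"
  proof -
    have "H A a n (degree P) (\<lambda>i. e i + p i) = of_nat (fact (degree P)) *
        (if \<forall>i<n. e i + p i \<le> K then (\<Prod>i<n. cf a K i (K - (e i + p i))) else 0)" if p: "p \<in> PS" for p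
    proof -
      have "(\<Sum>i<n. e i + p i) = (\<Sum>i<n. e i) + (\<Sum>i<n. i)"
        using sum_perm[of p n] p unfolding PS_def by (simp add: sum.distrib)
      then have "(\<Sum>i<n. e i + p i) + degree P = n * (card A - 1)" using sumh by simp
      from H_top[OF fin ne ch this] show ?thesis unfolding K_def by auto
    qed
    then have "(\<Sum>p\<in>PS. signof p * H A a n (degree P) (\<lambda>i. e i + p i)) =
       (\<Sum>p\<in>PS. of_nat (fact (degree P)) * (signof p * (if \<forall>i<n. e i + p i \<le> K then (\<Prod>i<n. cf a K i (K - (e i + p i))) else 0)))"
      by (intro sum.cong) (simp_all add: mult_ac)
    also have "\<dots> = of_nat (fact (degree P)) * det (Bm A a n e)"
      unfolding det_Bm K_def PS_def by (simp add: sum_distrib_left)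
    finally show ?thesis .
  qed
  finally show ?thesis by (simp add: mult_ac)
qed

lemma coeff_hp0: "coeff ((pderiv ^^ r) p) 0 = of_nat (fact r) * coeff p r"
  using coeff_higher_pderiv[of r p 0] by (simp add: pochhammer_fact flip: pochhammer_of_nat)

lemma hp_shift: "(pderiv ^^ r) (pcompose p [:b,1:]) = pcompose ((pderiv ^^ r) p) [:b,1:]"
proof (induction r)
  case 0 then show ?case by simp
next
  case (Suc r)
  have d: "pderiv [:b, 1:] = 1" by (simp add: pderiv_pCons)
  show ?case using Suc by (simp add: pderiv_pcompose d)
qed

lemma low_coeffs_dvd:
  fixes T :: "'a::field poly"
  shows "(\<forall>r<m. coeff T r = 0) \<Longrightarrow> [:0,1:]^m dvd T"
proof (induction m arbitrary: T)
  case 0 then show ?case by simp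
next
  case (Suc m)
  obtain c T' where T: "T = pCons c T'" by (cases T) auto
  have c: "c = 0" using Suc.prems T by force
  have "\<forall>r<m. coeff T' r = 0"
  proof (intro allI impI)
    fix r assume "r < m"
    then have "coeff T (Suc r) = 0" using Suc.prems by simp
    then show "coeff T' r = 0" using T by simp
  qed
  then have "[:0,1:]^m dvd T'" by (rule Suc.IH)
  then have "[:0,1:] * [:0,1:]^m dvd [:0,1:] * T'" by (rule mult_dvd_mono[OF dvd_refl])
  moreover have "[:0,1:] * T' = T" using T c by simp
  ultimately show ?case by simp
qed

lemma pcompose_power_left: "pcompose (p ^ m) q = (pcompose p q) ^ m"
  by (induction m) (simp_all add: pcompose_1 pcompose_mult)

lemma dvd_from_derivs:
  fixes Q :: "'a::field poly"
  assumes z: "\<forall>r<m. poly ((pderiv ^^ r) Q) b = 0" and f: "\<forall>r<m. of_nat (fact r) \<noteq> (0::'a)"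
  shows "[:-b,1:]^m dvd Q"
proof -
  define T where "T = pcompose Q [:b,1:]"
  have "\<forall>r<m. coeff T r = 0"
  proof (intro allI impI)
    fix r assume r: "r < m"
    have "of_nat (fact r) * coeff T r = coeff ((pderiv ^^ r) T) 0" by (simp add: coeff_hp0)
    also have "\<dots> = poly ((pderiv ^^ r) T) 0" by (simp add: poly_0_coeff_0)
    also have "\<dots> = poly ((pderiv ^^ r) Q) b" unfolding T_def hp_shift by (simp add: poly_pcompose)
    also have "\<dots> = 0" using z r by simp
    finally show "coeff T r = 0" using f r by simp
  qed
  then have "[:0,1:]^m dvd T" by (rule low_coeffs_dvd)
  then obtain U where U: "T = [:0,1:]^m * U" by (auto elim: dvdE)
  have "pcompose T [:-b,1:] = pcompose Q (pcompose [:b,1:] [:-b,1:])"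
    unfolding T_def by (simp add: pcompose_assoc)
  also have "pcompose [:b,1:] [:-b,1:] = [:0,1:]" by (simp add: pcompose_pCons)
  finally have "Q = pcompose T [:-b,1:]" by simp
  also have "\<dots> = [:-b,1:]^m * pcompose U [:-b,1:]"
    unfolding U pcompose_mult pcompose_power_left by (simp add: pcompose_pCons)
  finally show ?thesis by simp
qed

lemma e_img:
  fixes a :: "nat \<Rightarrow> 'a" and n :: nat and b :: 'a
  defines "G \<equiv> {i. i < n \<and> a i = b}"
  shows "(\<lambda>i. card {i'\<in>{..<i}. a i' = a i}) ` G = {..<card G}"
proof -
  define e where "e i = card {i'\<in>{..<i}. a i' = a i}" for i
  have lt: "e i < e i'" if "i \<in> G" "i' \<in> G" "i < i'" for i i'
  proof -
    have "{i''\<in>{..<i}. a i'' = a i} \<subset> {i''\<in>{..<i'}. a i'' = a i'}"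
      using that unfolding G_def by auto
    then show ?thesis unfolding e_def by (intro psubset_card_mono) auto
  qed
  have inj: "inj_on e G"
  proof (rule inj_onI)
    fix i i' assume "i \<in> G" "i' \<in> G" "e i = e i'"
    then show "i = i'" using lt[of i i'] lt[of i' i] by (cases i i' rule: linorder_cases) auto
  qed
  have sub: "e ` G \<subseteq> {..<card G}"
  proof
    fix x assume "x \<in> e ` G"
    then obtain i where i: "i \<in> G" "x = e i" by auto
    have "{i''\<in>{..<i}. a i'' = a i} \<subset> G" using i(1) unfolding G_def by auto
    then have "e i < card G" unfolding e_def G_def by (intro psubset_card_mono) auto
    then show "x \<in> {..<card G}" using i by simp
  qed
  have "card (e ` G) = card G" using inj by (rule card_image)
  then have "e ` G = {..<card G}" using sub by (intro card_subset_eq) auto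
  then show ?thesis unfolding e_def .
qed

lemma sum_fibres:
  assumes "finite S"
  shows "(\<Sum>b\<in>f ` S. card {x\<in>S. f x = b}) = card S"
proof -
  have "card (\<Union>b\<in>f ` S. {x\<in>S. f x = b}) = (\<Sum>b\<in>f ` S. card {x\<in>S. f x = b})"
    using assms by (intro card_UN_disjoint) auto
  moreover have "(\<Union>b\<in>f ` S. {x\<in>S. f x = b}) = S" by auto
  ultimately show ?thesis by simp
qed

definition Dm :: "nat \<Rightarrow> 'a::field poly" where
  "Dm m = smult (inverse (of_nat (fact m))) (monom 1 m)"

lemma pderiv_Dm:
  assumes "of_nat (fact m) \<noteq> (0::'a::field)"
  shows "(pderiv ^^ r) (Dm m :: 'a poly) = (if r \<le> m then Dm (m - r) else 0)"
proof (induction r)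
  case 0 then show ?case by simp
next
  case (Suc r)
  show ?case
  proof (cases "r \<le> m")
    case False then show ?thesis using Suc by simp
  next
    case True
    have "(pderiv ^^ Suc r) (Dm m :: 'a poly) = pderiv (Dm (m - r))" using Suc True by simp
    also have "\<dots> = (if Suc r \<le> m then Dm (m - Suc r) else 0)"
    proof (cases "m - r")
      case 0
      then have "\<not> Suc r \<le> m" by simp
      then show ?thesis using 0 by (simp add: Dm_def pderiv_smult)
    next
      case (Suc s)
      have nz: "of_nat (fact (m - r)) \<noteq> (0::'a)" using fact_nz[OF assms, of "m - r"] by simp
      then have nz1: "of_nat (Suc s) \<noteq> (0::'a)" and nz2: "of_nat (fact s) \<noteq> (0::'a)"
        unfolding Suc fact_Suc of_nat_mult by auto
      have nz3: "of_nat (fact s) + of_nat s * of_nat (fact s) \<noteq> (0::'a)"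
        using nz unfolding Suc by (simp add: fact_Suc algebra_simps)
      have "Suc r \<le> m" "m - Suc r = s" using Suc by auto
      moreover have "pderiv (Dm (Suc s) :: 'a poly) = Dm s"
        unfolding Dm_def pderiv_smult pderiv_monom fact_Suc
        using nz1 nz2 nz3 by (simp add: smult_monom field_simps algebra_simps)
      ultimately show ?thesis using Suc by simp
    qed
    finally show ?thesis .
  qed
qed

lemma Bm_nonsing:
  fixes A :: "'a::field set" and a :: "nat \<Rightarrow> 'a"
  assumes n: "n \<le> card A" and ch: "of_nat (fact (card A - 1)) \<noteq> (0::'a)"
    and nz: "\<forall>i<n. a i \<noteq> 0"
    and e_def: "e = (\<lambda>i. card {i'\<in>{..<i}. a i' = a i})"
  shows "det (Bm A a n e) \<noteq> 0"
proof
  assume "det (Bm A a n e) = 0"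
  then obtain v where v: "v \<in> carrier_vec n" "v \<noteq> 0\<^sub>v n" "Bm A a n e *\<^sub>v v = 0\<^sub>v n"
    using det_0_iff_vec_prod_zero_field[of "Bm A a n e" n] by (auto simp: Bm_def)
  define K where "K = card A - 1"
  have nK: "n \<le> Suc K" using n unfolding K_def by linarith
  have fK: "m \<le> K \<Longrightarrow> of_nat (fact m) \<noteq> (0::'a)" for m using fact_nz[OF ch] K_def by simp
  have rows: "(\<Sum>j<n. (if e i + j \<le> K then cf a K i (K - (e i + j)) else 0) * v $ j) = 0" if i: "i < n" for i
  proof -
    have "(Bm A a n e *\<^sub>v v) $ i = 0" using v(3) i by simp
    then show ?thesis using i v(1) unfolding Bm_def K_def
      by (simp add: scalar_prod_def atLeast0LessThan)
  qed
  define Q where "Q = (\<Sum>j<n. smult (v $ j) (Dm (K - j) :: 'a poly))"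
  have polyDm: "poly (Dm m) (a i) = cf a K i m" for m i
    unfolding Dm_def cf_def by (simp add: poly_monom field_simps)
  have rootQ: "poly ((pderiv ^^ e i) Q) (a i) = 0" if i: "i < n" for i
  proof -
    have "poly ((pderiv ^^ e i) Q) (a i) =
        (\<Sum>j<n. v $ j * (if e i \<le> K - j then cf a K i (K - j - e i) else 0))"
      unfolding Q_def higher_pderiv_sum higher_pderiv_smult poly_sum
      by (intro sum.cong) (use fK nK in \<open>auto simp: pderiv_Dm polyDm\<close>)
    also have "\<dots> = (\<Sum>j<n. (if e i + j \<le> K then cf a K i (K - (e i + j)) else 0) * v $ j)"
      by (intro sum.cong) (use nK in \<open>auto simp: algebra_simps\<close>)
    also have "\<dots> = 0" using rows[OF i] .
    finally show ?thesis .
  qed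
  have "\<exists>j<n. v $ j \<noteq> 0"
  proof (rule ccontr)
    assume "\<not> ?thesis"
    then have "v = 0\<^sub>v n" using v(1) by (intro eq_vecI) auto
    with v(2) show False by simp
  qed
  then obtain j0 where j0: "j0 < n" "v $ j0 \<noteq> 0" by blast
  have coeffQ: "coeff Q r = (\<Sum>j<n. if K - j = r then v $ j * inverse (of_nat (fact (K - j))) else 0)" for r
    unfolding Q_def Dm_def by (auto simp: coeff_sum intro!: sum.cong)
  have Q0: "Q \<noteq> 0"
  proof
    assume "Q = 0"
    then have "coeff Q (K - j0) = 0" by simp
    moreover have "coeff Q (K - j0) = v $ j0 * inverse (of_nat (fact (K - j0)))"
    proof -
      have "coeff Q (K - j0) = (\<Sum>j<n. if j = j0 then v $ j * inverse (of_nat (fact (K - j))) else 0)"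
        unfolding coeffQ by (intro sum.cong) (use nK j0 in auto)
      also have "\<dots> = v $ j0 * inverse (of_nat (fact (K - j0)))" using j0 by simp
      finally show ?thesis .
    qed
    ultimately show False using j0 fK[of "K - j0"] by simp
  qed
  have degQ: "degree Q \<le> K"
    unfolding Q_def Dm_def
    by (intro degree_sum_le) (auto intro: order_trans[OF degree_smult_le] order_trans[OF degree_monom_le])
  have ord0: "Suc K - n \<le> order 0 Q"
  proof -
    have "\<forall>r<Suc K - n. coeff Q r = 0"
      unfolding coeffQ by (auto intro!: sum.neutral)
    then have "[:-0,1:]^(Suc K - n) dvd Q" using low_coeffs_dvd by simp
    then show ?thesis using Q0 order_divides by blast
  qed
  define G where "G b = {i. i < n \<and> a i = b}" for b
  have ordb: "card (G b) \<le> order b Q" if b: "b \<in> a ` {..<n}" for b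
  proof -
    have "\<forall>r<card (G b). poly ((pderiv ^^ r) Q) b = 0"
    proof (intro allI impI)
      fix r assume "r < card (G b)"
      then have "r \<in> e ` G b" using e_img[of a n b] unfolding e_def G_def by simp
      then obtain i where "i \<in> G b" "r = e i" by auto
      then show "poly ((pderiv ^^ r) Q) b = 0" using rootQ unfolding G_def by auto
    qed
    moreover have "\<forall>r<card (G b). of_nat (fact r) \<noteq> (0::'a)"
    proof (intro allI impI)
      fix r assume "r < card (G b)"
      moreover have "card (G b) \<le> n" unfolding G_def
        using card_mono[of "{..<n}" "{i. i < n \<and> a i = b}"] by auto
      ultimately show "of_nat (fact r) \<noteq> (0::'a)" using fK nK by simp
    qed
    ultimately have "[:-b,1:]^card (G b) dvd Q" by (rule dvd_from_derivs)
    then show ?thesis using Q0 order_divides by blast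
  qed
  define R where "R = insert 0 (a ` {..<n})"
  have n0: "0 \<notin> a ` {..<n}" using nz by auto
  have "Suc K \<le> (Suc K - n) + (\<Sum>b\<in>a ` {..<n}. card (G b))"
  proof -
    have "(\<Sum>b\<in>a ` {..<n}. card (G b)) = n"
      using sum_fibres[of "{..<n}" a] unfolding G_def by simp
    then show ?thesis by simp
  qed
  also have "\<dots> \<le> order 0 Q + (\<Sum>b\<in>a ` {..<n}. order b Q)"
    using ord0 ordb by (intro add_mono sum_mono) auto
  also have "\<dots> = (\<Sum>x\<in>R. order x Q)" unfolding R_def using n0 by simp
  also have "\<dots> = (\<Sum>x\<in>R \<inter> {x. poly Q x = 0}. order x Q)"
  proof (rule sum.mono_neutral_right)
    show "finite R" unfolding R_def by simp
    show "\<forall>x\<in>R - R \<inter> {x. poly Q x = 0}. order x Q = 0" using order_root by auto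
  qed auto
  also have "\<dots> \<le> (\<Sum>x | poly Q x = 0. order x Q)"
    by (rule sum_mono2) (use poly_roots_finite[OF Q0] in auto)
  also have "\<dots> \<le> degree Q" by (rule sum_order_le_degree[OF Q0])
  finally show False using degQ by simp
qed

lemma pair_count:
  fixes b :: "nat \<Rightarrow> 'a" and n :: nat
  shows "(\<Sum>S\<in>{S. S \<subseteq> b ` {..<n} \<and> card S = 2}. \<Prod>v\<in>S. card {i. i < n \<and> b i = v})
       = card {(i,j). i < j \<and> j < n \<and> b i \<noteq> b j}"
proof -
  define PP where "PP = {(i,j). i < j \<and> j < n \<and> b i \<noteq> b j}"
  define SS where "SS = {S. S \<subseteq> b ` {..<n} \<and> card S = 2}"
  define Fib where "Fib S = {p\<in>PP. {b (fst p), b (snd p)} = S}" for S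
  define fb where "fb v = {i. i < n \<and> b i = v}" for v
  have finPP: "finite PP"
    by (rule finite_subset[of _ "{..<n} \<times> {..<n}"]) (auto simp: PP_def)
  have finSS: "finite SS"
    by (rule finite_subset[of _ "Pow (b ` {..<n})"]) (auto simp: SS_def)
  have UN: "PP = (\<Union>S\<in>SS. Fib S)"
  proof
    show "PP \<subseteq> (\<Union>S\<in>SS. Fib S)"
    proof
      fix p assume p: "p \<in> PP"
      then obtain i j where ij: "p = (i,j)" "i < j" "j < n" "b i \<noteq> b j" unfolding PP_def by auto
      have "{b i, b j} \<in> SS" unfolding SS_def using ij by auto
      moreover have "p \<in> Fib {b i, b j}" unfolding Fib_def using p ij by auto
      ultimately show "p \<in> (\<Union>S\<in>SS. Fib S)" by blast
    qed
  qed (auto simp: Fib_def)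
  have "card PP = (\<Sum>S\<in>SS. card (Fib S))"
    unfolding UN
    by (rule card_UN_disjoint[OF finSS]) (use finPP in \<open>auto simp: Fib_def intro: finite_subset\<close>)
  also have "\<dots> = (\<Sum>S\<in>SS. \<Prod>v\<in>S. card (fb v))"
  proof (rule sum.cong[OF refl])
    fix S assume "S \<in> SS"
    then obtain v w where S: "S = {v, w}" "v \<noteq> w" unfolding SS_def by (auto simp: card_2_iff)
    define g where "g p = (min (fst p) (snd p), max (fst p) (snd p))" for p :: "nat \<times> nat"
    have inj: "inj_on g (fb v \<times> fb w)"
    proof (rule inj_onI)
      fix p q assume p: "p \<in> fb v \<times> fb w" and q: "q \<in> fb v \<times> fb w" and e: "g p = g q"
      obtain i j where pij: "p = (i,j)" by force
      obtain i' j' where qij: "q = (i',j')" by force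
      have vals: "b i = v" "b j = w" "b i' = v" "b j' = w"
        using p q pij qij unfolding fb_def by auto
      have "min i j = min i' j'" "max i j = max i' j'" using e pij qij unfolding g_def by auto
      then show "p = q" using vals S(2) pij qij
        by (auto simp: min_def max_def split: if_splits)
    qed
    have img: "g ` (fb v \<times> fb w) = Fib S"
    proof
      show "g ` (fb v \<times> fb w) \<subseteq> Fib S"
      proof
        fix p assume "p \<in> g ` (fb v \<times> fb w)"
        then obtain i j where ij: "i < n" "b i = v" "j < n" "b j = w" "p = g (i,j)"
          unfolding fb_def by auto
        then have "i \<noteq> j" using S(2) by auto
        then show "p \<in> Fib S" using ij S unfolding Fib_def PP_def g_def
          by (cases "i < j") (auto simp: min_def max_def)
      qed
    next
      show "Fib S \<subseteq> g ` (fb v \<times> fb w)"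
      proof
        fix p assume "p \<in> Fib S"
        then obtain i j where ij: "p = (i,j)" "i < j" "j < n" "b i \<noteq> b j" "{b i, b j} = {v, w}"
          unfolding Fib_def PP_def S by auto
        show "p \<in> g ` (fb v \<times> fb w)"
        proof (cases "b i = v")
          case True
          then have "b j = w" using ij(4,5) by (metis doubleton_eq_iff)
          then have "(i,j) \<in> fb v \<times> fb w" using True ij unfolding fb_def by auto
          moreover have "g (i,j) = p" using ij unfolding g_def by auto
          ultimately show ?thesis by force
        next
          case False
          then have "b i = w" "b j = v" using ij(4,5) by (metis doubleton_eq_iff)+
          then have "(j,i) \<in> fb v \<times> fb w" using ij unfolding fb_def by auto
          moreover have "g (j,i) = p" using ij unfolding g_def by auto
          ultimately show ?thesis by force
        qed
      qed
    qed
    have "card (Fib S) = card (fb v \<times> fb w)" using card_image[OF inj] img by simp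
    also have "\<dots> = card (fb v) * card (fb w)" by (simp add: card_cartesian_product)
    also have "\<dots> = (\<Prod>x\<in>S. card (fb x))" using S by simp
    finally show "card (Fib S) = (\<Prod>x\<in>S. card (fb x))" .
  qed
  finally show ?thesis unfolding PP_def SS_def fb_def by simp
qed

lemma pair_by_j:
  fixes b :: "nat \<Rightarrow> 'a"
  shows "card {(i,j). i < j \<and> j < n \<and> b i \<noteq> b j} = (\<Sum>j<n. card {i. i < j \<and> b i \<noteq> b j})"
proof -
  have eq: "{(i,j). i < j \<and> j < n \<and> b i \<noteq> b j} = (\<Union>j<n. (\<lambda>i. (i,j)) ` {i. i < j \<and> b i \<noteq> b j})"
    by auto
  have "card (\<Union>j<n. (\<lambda>i. (i,j)) ` {i. i < j \<and> b i \<noteq> b j}) = (\<Sum>j<n. card ((\<lambda>i. (i,j)) ` {i. i < j \<and> b i \<noteq> b j}))"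
    by (rule card_UN_disjoint) auto
  also have "\<dots> = (\<Sum>j<n. card {i. i < j \<and> b i \<noteq> b j})"
    by (rule sum.cong[OF refl]) (simp add: card_image inj_on_def)
  finally show ?thesis unfolding eq .
qed

lemma e_plus:
  fixes b :: "nat \<Rightarrow> 'a"
  shows "card {i'\<in>{..<j}. b i' = b j} + card {i. i < j \<and> b i \<noteq> b j} = j"
proof -
  have "card ({i'\<in>{..<j}. b i' = b j} \<union> {i. i < j \<and> b i \<noteq> b j}) =
      card {i'\<in>{..<j}. b i' = b j} + card {i. i < j \<and> b i \<noteq> b j}"
    by (rule card_Un_disjoint) auto
  moreover have "{i'\<in>{..<j}. b i' = b j} \<union> {i. i < j \<and> b i \<noteq> b j} = {..<j}" by auto
  ultimately show ?thesis by simp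
qed

lemma pair_lower:
  fixes b :: "nat \<Rightarrow> 'a"
  assumes "0 < (\<Sum>j<n. card {i. i < j \<and> b i \<noteq> b j})"
  shows "n - 1 \<le> (\<Sum>j<n. card {i. i < j \<and> b i \<noteq> b j})"
proof -
  define c where "c j = card {i. i < j \<and> b i \<noteq> b j}" for j
  from assms obtain j where j: "j < n" "0 < c j" unfolding c_def
    by (metis (no_types, lifting) gr0I sum.neutral lessThan_iff)
  then obtain i where i: "i < j" "b i \<noteq> b j"
    unfolding c_def by (metis (mono_tags, lifting) Collect_empty_eq card.empty less_irrefl)
  have ex: "\<exists>k. k < n \<and> b k \<noteq> b 0"
    using i j by (metis order.strict_trans)
  define i1 where "i1 = (LEAST k. k < n \<and> b k \<noteq> b 0)"
  have i1: "i1 < n" "b i1 \<noteq> b 0" using LeastI_ex[OF ex] unfolding i1_def by auto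
  have below: "k < i1 \<Longrightarrow> b k = b 0" for k
    using not_less_Least[of k "\<lambda>k. k < n \<and> b k \<noteq> b 0"] i1 unfolding i1_def by auto
  have ci1: "c i1 = i1"
  proof -
    have "{i. i < i1 \<and> b i \<noteq> b i1} = {..<i1}"
    proof
      show "{..<i1} \<subseteq> {i. i < i1 \<and> b i \<noteq> b i1}"
      proof
        fix k assume "k \<in> {..<i1}"
        then have "k < i1" by simp
        then have "b k = b 0" by (rule below)
        then show "k \<in> {i. i < i1 \<and> b i \<noteq> b i1}" using \<open>k < i1\<close> i1(2) by simp
      qed
    qed auto
    then show ?thesis unfolding c_def by simp
  qed
  have cj: "1 \<le> c j'" if "i1 < j'" for j'
  proof -
    have "\<exists>i. i < j' \<and> b i \<noteq> b j'"
    proof (cases "b j' = b 0")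
      case True then show ?thesis using that i1 by auto
    next
      case False then show ?thesis using that by (intro exI[of _ 0]) auto
    qed
    then have "{i. i < j' \<and> b i \<noteq> b j'} \<noteq> {}" by auto
    moreover have "finite {i. i < j' \<and> b i \<noteq> b j'}" by auto
    ultimately show ?thesis unfolding c_def by (simp add: Suc_leI card_gt_0_iff)
  qed
  have "n - 1 = i1 + card {i1<..<n}" using i1 by simp
  also have "\<dots> \<le> c i1 + (\<Sum>j\<in>{i1<..<n}. c j)"
    using ci1 cj by (intro add_mono) (auto intro: order_trans[OF _ sum_mono[of _ "\<lambda>_. 1"]])
  also have "\<dots> = (\<Sum>j\<in>insert i1 {i1<..<n}. c j)" by simp
  also have "\<dots> \<le> (\<Sum>j<n. c j)" by (rule sum_mono2) (use i1 in auto)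
  finally show ?thesis unfolding c_def .
qed

lemma sum_lt_twice: "(\<Sum>i<n. i) * 2 = n * (n - 1 :: nat)"
  by (induction n) (auto simp: algebra_simps)

theorem mainTheorem2:
  fixes A :: "'a::field set" and a :: "nat \<Rightarrow> 'a" and n :: nat
  assumes "finite A"
    and "n \<le> card A"
    and "\<forall>i\<in>{1..n}. a i \<noteq> 0"
    and "CHAR('a) = 0 \<or> CHAR('a) > dval A a n"
  shows "card (restricted_sums A a n) \<ge> dval A a n + 1"
proof -
  note finA = assms(1) and nA = assms(2) and nz = assms(3) and chr = assms(4)
  define C where "C = restricted_sums A a n"
  define d where "d = dval A a n"
  define b where "b i = a (Suc i)" for i
  have finC: "finite C"
  proof (rule finite_subset)
    show "C \<subseteq> (\<lambda>x. \<Sum>i=1..n. a i * x i) ` PiE {1..n} (\<lambda>_. A)"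
    proof
      fix s assume "s \<in> C"
      then obtain x where x: "s = (\<Sum>i=1..n. a i * x i)" "\<forall>i\<in>{1..n}. x i \<in> A"
        unfolding C_def restricted_sums_def by auto
      have "restrict x {1..n} \<in> PiE {1..n} (\<lambda>_. A)" using x(2) by auto
      moreover have "s = (\<Sum>i=1..n. a i * restrict x {1..n} i)" using x(1) by simp
      ultimately show "s \<in> (\<lambda>x. \<Sum>i=1..n. a i * x i) ` PiE {1..n} (\<lambda>_. A)" by blast
    qed
    show "finite ((\<lambda>x. \<Sum>i=1..n. a i * x i) ` PiE {1..n} (\<lambda>_. A))"
      using finA by (intro finite_imageI finite_PiE) auto
  qed
  have neC: "C \<noteq> {}"
  proof -
    obtain f where f: "f ` {1..n} \<subseteq> A" "inj_on f {1..n}"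
      using card_le_inj[of "{1..n}" A] finA nA by auto
    then have "(\<Sum>i=1..n. a i * f i) \<in> C" unfolding C_def restricted_sums_def
      by (intro CollectI exI[of _ f]) auto
    then show ?thesis by auto
  qed
  have mult_eq: "mult_of a n v = card {i. i < n \<and> b i = v}" for v
  proof -
    have "{i \<in> {1..n}. a i = v} = Suc ` {i. i < n \<and> b i = v}"
    proof
      show "{i \<in> {1..n}. a i = v} \<subseteq> Suc ` {i. i < n \<and> b i = v}"
      proof
        fix i assume i: "i \<in> {i \<in> {1..n}. a i = v}"
        then have "i = Suc (i - 1)" "i - 1 < n" "b (i - 1) = v" unfolding b_def by auto
        then show "i \<in> Suc ` {i. i < n \<and> b i = v}" by blast
      qed
    qed (auto simp: b_def)
    then show ?thesis unfolding mult_of_def by (simp add: card_image)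
  qed
  have img_eq: "a ` {1..n} = b ` {..<n}"
  proof -
    have "{1..n} = Suc ` {..<n}" by (simp add: image_Suc_lessThan)
    then show ?thesis unfolding b_def by (simp add: image_image)
  qed
  have pair: "pair_mult_sum a n = (\<Sum>j<n. card {i. i < j \<and> b i \<noteq> b j})"
    unfolding pair_mult_sum_def img_eq mult_eq pair_count pair_by_j ..
  define e where "e = (\<lambda>i. card {i'\<in>{..<i}. b i' = b i})"
  have sum_e: "(\<Sum>j<n. e j) + pair_mult_sum a n = (\<Sum>j<n. j)"
    unfolding pair e_def sum.distrib[symmetric] using e_plus[where b=b] by simp
  have dform: "d = n * (card A - n) + pair_mult_sum a n" unfolding d_def dval_def ..
  show ?thesis
  proof (cases "d = 0")
    case True
    then show ?thesis using finC neC unfolding C_def d_def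
      by (simp add: Suc_leI card_gt_0_iff)
  next
    case False
    then have d0: "0 < d" by simp
    have n1: "1 \<le> n"
    proof (rule ccontr)
      assume "\<not> 1 \<le> n" then have "n = 0" by simp
      then have "d = 0" using dform pair by simp
      then show False using d0 by simp
    qed
    have cA: "1 \<le> card A" using n1 nA by simp
    then have neA: "A \<noteq> {}" by auto
    define K where "K = card A - 1"
    have Kd: "K \<le> d"
    proof (cases "n < card A")
      case True
      obtain n' where n': "n = Suc n'" using n1 by (cases n) auto
      obtain m where m: "card A - n = Suc m" using True by (metis Suc_diff_Suc)
      have "K = Suc m + n'" unfolding K_def using m n' True by simp
      also have "\<dots> \<le> Suc n' * Suc m"
      proof -
        have "n' \<le> n' * Suc m" by simp
        then show ?thesis by simp
      qed
      also have "\<dots> = n * (card A - n)" using n' m by simp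
      also have "\<dots> \<le> d" using dform by simp
      finally show ?thesis .
    next
      case False
      then have nc: "n = card A" using nA by simp
      then have "d = pair_mult_sum a n" using dform by simp
      then have "0 < (\<Sum>j<n. card {i. i < j \<and> b i \<noteq> b j})" using d0 pair by simp
      then have "n - 1 \<le> (\<Sum>j<n. card {i. i < j \<and> b i \<noteq> b j})" by (rule pair_lower)
      then show ?thesis using nc pair \<open>d = pair_mult_sum a n\<close> K_def by simp
    qed
    have factnz: "of_nat (fact m) \<noteq> (0::'a)" if m: "m \<le> d" for m
    proof -
      have "of_nat (fact m) = (\<Prod>k\<in>{1..m}. (of_nat k :: 'a))"
        by (simp add: fact_prod of_nat_prod)
      also have "\<dots> \<noteq> 0"
      proof -
        have "(of_nat k :: 'a) \<noteq> 0" if k: "k \<in> {1..m}" for k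
        proof
          assume "(of_nat k :: 'a) = 0"
          then have dv: "CHAR('a) dvd k" by (simp add: of_nat_eq_0_iff_char_dvd)
          show False
          proof (cases "CHAR('a) = 0")
            case True then show False using dv k by simp
          next
            case False
            then have "CHAR('a) > d" using chr d_def by simp
            moreover have "CHAR('a) \<le> k" using dv k by (intro dvd_imp_le) auto
            ultimately show False using k m by simp
          qed
        qed
        then show ?thesis by simp
      qed
      finally show ?thesis .
    qed
    have ch: "of_nat (fact (card A - 1)) \<noteq> (0::'a)" using factnz Kd K_def by simp
    have chd: "of_nat (fact d) \<noteq> (0::'a)" using factnz by simp
    show ?thesis
    proof (rule ccontr)
      assume "\<not> ?thesis"
      then have cC: "card C \<le> d" unfolding C_def d_def by simp
      define P where "P = (\<Prod>c\<in>C. [:-c,1:]) * [:0,1::'a:]^(d - card C)"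
      have degP: "degree P = d"
      proof -
        have "degree (\<Prod>c\<in>C. [:-c,1::'a:]) = card C" using monic_prod_lin[OF finC] by simp
        moreover have "degree ([:0,1::'a:]^(d - card C)) = d - card C" by (simp add: degree_power_eq)
        moreover have "(\<Prod>c\<in>C. [:-c,1::'a:]) \<noteq> 0" using finC by (simp add: prod_zero_iff)
        ultimately show ?thesis unfolding P_def using cC by (subst degree_mult_eq) auto
      qed
      have lcP: "lead_coeff P = 1"
        unfolding P_def lead_coeff_mult lead_coeff_power by (simp add: lead_coeff_prod)
      have sumh: "(\<Sum>i<n. e i) + (\<Sum>i<n. i) + degree P = n * (card A - 1)"
      proof -
        have "(\<Sum>i<n. e i) + (\<Sum>i<n. i) + degree P = (\<Sum>i<n. i) * 2 + n * (card A - n)"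
          using sum_e dform degP by simp
        also have "\<dots> = n * (n - 1) + n * (card A - n)" by (simp add: sum_lt_twice)
        also have "\<dots> = n * ((n - 1) + (card A - n))" by (simp add: distrib_left)
        also have "(n - 1) + (card A - n) = card A - 1" using n1 nA by linarith
        finally show ?thesis .
      qed
      have nzb: "\<forall>i<n. b i \<noteq> 0" using nz unfolding b_def by auto
      have Lval: "Lf A n (\<lambda>x. (\<Prod>i<n. x i ^ e i) * V n x * poly P (Sx b n x)) =
         of_nat (fact (degree P)) * lead_coeff P * det (Bm A b n e)"
        by (rule L_main[OF finA neA ch sumh])
      have "det (Bm A b n e) \<noteq> 0" by (rule Bm_nonsing[OF nA ch nzb e_def])
      then have L1: "Lf A n (\<lambda>x. (\<Prod>i<n. x i ^ e i) * V n x * poly P (Sx b n x)) \<noteq> 0"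
        using chd lcP degP by (simp add: Lval)
      have "Lf A n (\<lambda>x. (\<Prod>i<n. x i ^ e i) * V n x * poly P (Sx b n x)) = 0"
        unfolding Lf_def
      proof (rule sum.neutral, intro ballI)
        fix c assume c: "c \<in> PiE {..<n} (\<lambda>_. A)"
        have "(\<Prod>i<n. c i ^ e i) * V n c * poly P (Sx b n c) = 0"
        proof (cases "inj_on c {..<n}")
          case False
          then have "V n c = 0" by (rule V_zero)
          then show ?thesis by simp
        next
          case True
          define x where "x i = c (i - 1)" for i
          have xA: "\<forall>i\<in>{1..n}. x i \<in> A"
          proof
            fix i assume "i \<in> {1..n}"
            then have "i - 1 \<in> {..<n}" by auto
            then have "c (i - 1) \<in> A" using c by (rule PiE_mem[rotated])
            then show "x i \<in> A" unfolding x_def .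
          qed
          have xinj: "inj_on x {1..n}"
          proof (rule inj_onI)
            fix i j assume ij: "i \<in> {1..n}" "j \<in> {1..n}" "x i = x j"
            have "c (i - 1) = c (j - 1)" using ij(3) unfolding x_def .
            moreover have "i - 1 \<in> {..<n}" "j - 1 \<in> {..<n}" using ij by auto
            ultimately have "i - 1 = j - 1" by (rule inj_onD[OF True])
            then show "i = j" using \<open>i \<in> {1..n}\<close> \<open>j \<in> {1..n}\<close> by auto
          qed
          have sx: "Sx b n c = (\<Sum>i=1..n. a i * x i)"
            unfolding Sx_def b_def x_def using sum.atLeast1_atMost_eq[of "\<lambda>i. a i * c (i - 1)" n]
            by simp
          have "Sx b n c \<in> C" unfolding C_def restricted_sums_def
            by (rule CollectI, rule exI[of _ x]) (use sx xA xinj in simp)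
          then have "poly (\<Prod>c\<in>C. [:-c,1::'a:]) (Sx b n c) = 0"
            using finC by (auto simp: poly_prod intro!: prod_zero)
          then have "poly P (Sx b n c) = 0" unfolding P_def by simp
          then show ?thesis by simp
        qed
        then show "(\<Prod>i<n. c i ^ e i) * V n c * poly P (Sx b n c) * (\<Prod>i<n. wt A (c i)) = 0" by simp
      qed
      with L1 show False by simp
    qed
  qed
qed

end
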